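(* Let $U\subset\mathbb R^2$ be open and $f\in C^2(U)$ a solution of \[ 2(x-2f_y)(y+2f_x)(f_{yy}-f_{xx})+(1-2f_{xy})(y+2f_x)^2+(x-2f_y)^2(1+2f_{xy})=0 \quad (\ast) \] on $U$. If $x-2f_y\ne0$ on $U$, then $g=\dfrac{y+2f_x}{x-2f_y}$ satisfies the backward inviscid Burgers equation $g_y=g\,g_x$ on $U$. If $y+2f_x\neq0$ on $U$, then $h=\dfrac{x-2f_y}{y+2f_x}$ satisfies $h_x=h\,h_y$ on $U$.
   Context: Equation $(\ast)$ is the equation characterizing graphs $z=f(x,y)$ in the Heisenberg group with vanishing curvature of transversality. *)

theory Defs
  imports "HOL-Analysis.Analysis"
begin

definition px :: "(real \<times> real \<Rightarrow> real) \<Rightarrow> real \<times> real \<Rightarrow> real" where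
  "px F p = deriv (\<lambda>t. F (t, snd p)) (fst p)"

definition py :: "(real \<times> real \<Rightarrow> real) \<Rightarrow> real \<times> real \<Rightarrow> real" where
  "py F p = deriv (\<lambda>t. F (fst p, t)) (snd p)"

definition has_partials_on :: "(real \<times> real) set \<Rightarrow> (real \<times> real \<Rightarrow> real) \<Rightarrow> bool" where
  "has_partials_on U F \<longleftrightarrow>
     (\<forall>p\<in>U. (\<lambda>t. F (t, snd p)) differentiable (at (fst p))
           \<and> (\<lambda>t. F (fst p, t)) differentiable (at (snd p)))"

definition C1_on :: "(real \<times> real) set \<Rightarrow> (real \<times> real \<Rightarrow> real) \<Rightarrow> bool" where
  "C1_on U F \<longleftrightarrow> has_partials_on U F
     \<and> continuous_on U (px F) \<and> continuous_on U (py F)"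

definition C2_on :: "(real \<times> real) set \<Rightarrow> (real \<times> real \<Rightarrow> real) \<Rightarrow> bool" where
  "C2_on U F \<longleftrightarrow> continuous_on U F \<and> C1_on U F \<and> C1_on U (px F) \<and> C1_on U (py F)"

end

theory Submission imports Defs begin

lemma dist_sq:
  assumes "\<bar>s-x0\<bar> \<le> h" "\<bar>t-y0\<bar> \<le> h" "0<h"
  shows "dist (s,t) (x0::real,y0::real) < 2*h"
proof -
  have a: "(s-x0)^2 \<le> h^2" "(t-y0)^2 \<le> h^2"
    using assms abs_le_square_iff[of "s-x0" h] abs_le_square_iff[of "t-y0" h] by auto
  have b: "(dist s x0)^2 + (dist t y0)^2 = (s-x0)^2 + (t-y0)^2" by (simp add: dist_real_def)
  have c: "(2*h)^2 = 4*h^2" by (simp add: power2_eq_square)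
  have d: "h^2 > 0" using assms by simp
  have "(dist s x0)^2 + (dist t y0)^2 < (2*h)^2"
    unfolding b c using a d by linarith
  hence L: "sqrt ((dist s x0)^2 + (dist t y0)^2) < sqrt ((2*h)^2)"
    using real_sqrt_less_iff by blast
  have E: "sqrt ((2*h)^2) = 2*h" using assms real_sqrt_abs[of "2*h"] by (simp only:)
  show ?thesis unfolding dist_Pair_Pair using L E by linarith
qed

lemma secx:
  assumes "has_partials_on U F" "q \<in> U"
  shows "((\<lambda>t. F (t, snd q)) has_real_derivative px F q) (at (fst q))"
  using assms unfolding has_partials_on_def px_def
  by (simp add: DERIV_deriv_iff_real_differentiable)

lemma secy:
  assumes "has_partials_on U F" "q \<in> U"
  shows "((\<lambda>t. F (fst q, t)) has_real_derivative py F q) (at (snd q))"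
  using assms unfolding has_partials_on_def py_def
  by (simp add: DERIV_deriv_iff_real_differentiable)

lemma schwarz:
  assumes "open U" "C2_on U f" "p \<in> U"
  shows "px (py f) p = py (px f) p"
proof -
  obtain x0 y0 where p: "p = (x0,y0)" by (cases p)
  obtain r where r: "r > 0" "ball p r \<subseteq> U" using assms openE by blast
  have Pf: "has_partials_on U f" and PD: "has_partials_on U (px f)" and PE: "has_partials_on U (py f)"
    and cD: "continuous_on U (py (px f))" and cE: "continuous_on U (px (py f))"
    using assms(2) unfolding C2_on_def C1_on_def by auto
  have inU: "(s,t) \<in> U" if "x0 \<le> s" "s \<le> x0+h" "y0 \<le> t" "t \<le> y0+h" "0<h" "2*h<r" for s t h
  proof -
    have "dist (s,t) p < 2*h" unfolding p using that by (intro dist_sq) auto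
    hence "dist p (s,t) < r" using that by (simp add: dist_commute)
    thus ?thesis using r by auto
  qed
  have claim: "\<exists>q1 q2. dist q1 p < 2*h \<and> dist q2 p < 2*h \<and> py (px f) q1 = px (py f) q2"
    if h: "0<h" "2*h<r" for h
  proof -
    define \<Delta> where "\<Delta> = f (x0+h,y0+h) - f (x0+h,y0) - f (x0,y0+h) + f (x0,y0)"
    have "\<exists>\<xi>. x0 < \<xi> \<and> \<xi> < x0+h \<and>
        (\<lambda>s. f (s,y0+h) - f (s,y0)) (x0+h) - (\<lambda>s. f (s,y0+h) - f (s,y0)) x0
        = (x0+h-x0) * (px f (\<xi>,y0+h) - px f (\<xi>,y0))"
    proof (rule MVT2)
      show "x0 < x0+h" using h by simp
      fix s assume s: "x0 \<le> s" "s \<le> x0+h"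
      have "(s,y0+h) \<in> U" "(s,y0) \<in> U" using inU[of s h "y0+h"] inU[of s h y0] s h by auto
      from secx[OF Pf this(1)] secx[OF Pf this(2)]
      show "((\<lambda>s. f (s,y0+h) - f (s,y0)) has_real_derivative (px f (s,y0+h) - px f (s,y0))) (at s)"
        by (auto intro!: derivative_eq_intros)
    qed
    then obtain \<xi> where xi: "x0 < \<xi>" "\<xi> < x0+h" "\<Delta> = h * (px f (\<xi>,y0+h) - px f (\<xi>,y0))"
      unfolding \<Delta>_def by auto
    have "\<exists>\<eta>. y0 < \<eta> \<and> \<eta> < y0+h \<and>
        (\<lambda>t. px f (\<xi>,t)) (y0+h) - (\<lambda>t. px f (\<xi>,t)) y0 = (y0+h-y0) * py (px f) (\<xi>,\<eta>)"
    proof (rule MVT2)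
      show "y0 < y0+h" using h by simp
      fix t assume t: "y0 \<le> t" "t \<le> y0+h"
      have "(\<xi>,t) \<in> U" using inU[of \<xi> h t] t h xi by auto
      from secy[OF PD this] show "((\<lambda>t. px f (\<xi>,t)) has_real_derivative py (px f) (\<xi>,t)) (at t)"
        by simp
    qed
    then obtain \<eta> where eta: "y0 < \<eta>" "\<eta> < y0+h" "px f (\<xi>,y0+h) - px f (\<xi>,y0) = h * py (px f) (\<xi>,\<eta>)"
      by auto
    have "\<exists>\<eta>'. y0 < \<eta>' \<and> \<eta>' < y0+h \<and>
        (\<lambda>t. f (x0+h,t) - f (x0,t)) (y0+h) - (\<lambda>t. f (x0+h,t) - f (x0,t)) y0
        = (y0+h-y0) * (py f (x0+h,\<eta>') - py f (x0,\<eta>'))"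
    proof (rule MVT2)
      show "y0 < y0+h" using h by simp
      fix t assume t: "y0 \<le> t" "t \<le> y0+h"
      have "(x0+h,t) \<in> U" "(x0,t) \<in> U" using inU[of "x0+h" h t] inU[of x0 h t] t h by auto
      from secy[OF Pf this(1)] secy[OF Pf this(2)]
      show "((\<lambda>t. f (x0+h,t) - f (x0,t)) has_real_derivative (py f (x0+h,t) - py f (x0,t))) (at t)"
        by (auto intro!: derivative_eq_intros)
    qed
    then obtain \<eta>' where eta': "y0 < \<eta>'" "\<eta>' < y0+h" "\<Delta> = h * (py f (x0+h,\<eta>') - py f (x0,\<eta>'))"
      unfolding \<Delta>_def by (auto simp: algebra_simps)
    have "\<exists>\<xi>'. x0 < \<xi>' \<and> \<xi>' < x0+h \<and>
        (\<lambda>s. py f (s,\<eta>')) (x0+h) - (\<lambda>s. py f (s,\<eta>')) x0 = (x0+h-x0) * px (py f) (\<xi>',\<eta>')"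
    proof (rule MVT2)
      show "x0 < x0+h" using h by simp
      fix s assume s: "x0 \<le> s" "s \<le> x0+h"
      have "(s,\<eta>') \<in> U" using inU[of s h \<eta>'] s h eta' by auto
      from secx[OF PE this] show "((\<lambda>s. py f (s,\<eta>')) has_real_derivative px (py f) (s,\<eta>')) (at s)"
        by simp
    qed
    then obtain \<xi>' where xi': "x0 < \<xi>'" "\<xi>' < x0+h" "py f (x0+h,\<eta>') - py f (x0,\<eta>') = h * px (py f) (\<xi>',\<eta>')"
      by auto
    have A: "\<Delta> = h*(h * py (px f) (\<xi>,\<eta>))" using xi(3) eta(3) by simp
    have B: "\<Delta> = h*(h * px (py f) (\<xi>',\<eta>'))" using eta'(3) xi'(3) by simp
    have eq: "py (px f) (\<xi>,\<eta>) = px (py f) (\<xi>',\<eta>')" using A B h by simp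
    have "dist (\<xi>,\<eta>) p < 2*h" "dist (\<xi>',\<eta>') p < 2*h"
      unfolding p using xi eta xi' eta' h by (auto intro!: dist_sq)
    thus ?thesis using eq by blast
  qed
  have cD': "isCont (py (px f)) p" and cE': "isCont (px (py f)) p"
    using cD cE assms(1,3) continuous_on_eq_continuous_at by blast+
  show ?thesis
  proof (rule ccontr)
    assume ne: "px (py f) p \<noteq> py (px f) p"
    define e where "e = \<bar>px (py f) p - py (px f) p\<bar> / 2"
    have e: "e > 0" using ne by (simp add: e_def)
    obtain d1 where d1: "d1 > 0" "\<And>q. dist q p < d1 \<Longrightarrow> dist (py (px f) q) (py (px f) p) < e"
      using cD' e unfolding continuous_at_eps_delta by blast
    obtain d2 where d2: "d2 > 0" "\<And>q. dist q p < d2 \<Longrightarrow> dist (px (py f) q) (px (py f) p) < e"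
      using cE' e unfolding continuous_at_eps_delta by blast
    define h where "h = min (min d1 d2) r / 4"
    have h: "0 < h" "2*h < r" "2*h \<le> d1" "2*h \<le> d2" using d1 d2 r by (auto simp: h_def)
    obtain q1 q2 where q: "dist q1 p < 2*h" "dist q2 p < 2*h" "py (px f) q1 = px (py f) q2"
      using claim[OF h(1,2)] by blast
    have "dist (py (px f) q1) (py (px f) p) < e" using d1(2)[of q1] q h by linarith
    moreover have "dist (px (py f) q2) (px (py f) p) < e" using d2(2)[of q2] q h by linarith
    moreover have "\<bar>px (py f) p - py (px f) p\<bar> \<le> \<bar>px (py f) q2 - px (py f) p\<bar> + \<bar>px (py f) q2 - py (px f) p\<bar>"
      by (smt (verit))
    ultimately show False using q(3) by (simp add: e_def dist_real_def)
  qed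
qed


lemma alg1:
  fixes a b A B C :: real
  assumes "b \<noteq> 0" "2*b*a*(C - A) + (1-2*B)*a^2 + b^2*(1+2*B) = 0"
  shows "((1+2*B)*b - a*(-2*C))/(b*b) = a/b * ((2*A*b - a*(1-2*B))/(b*b))"
proof -
  have "((1+2*B)*b - a*(-2*C))/(b*b) - a/b * ((2*A*b - a*(1-2*B))/(b*b))
     = (2*b*a*(C - A) + (1-2*B)*a^2 + b^2*(1+2*B)) / (b*b*b)"
    using assms(1) by (simp add: field_simps power2_eq_square)
  thus ?thesis using assms(2) by simp
qed
lemma alg2:
  fixes a b A B C :: real
  assumes "a \<noteq> 0" "2*b*a*(C - A) + (1-2*B)*a^2 + b^2*(1+2*B) = 0"
  shows "((1-2*B)*a - b*(2*A))/(a*a) = b/a * (((-2*C)*a - b*(1+2*B))/(a*a))"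
proof -
  have "((1-2*B)*a - b*(2*A))/(a*a) - b/a * (((-2*C)*a - b*(1+2*B))/(a*a))
     = (2*b*a*(C - A) + (1-2*B)*a^2 + b^2*(1+2*B)) / (a*a*a)"
    using assms(1) by (simp add: field_simps power2_eq_square)
  thus ?thesis using assms(2) by simp
qed

lemma pxe: "px G (x,y) = deriv (\<lambda>t. G (t,y)) x" unfolding px_def by simp
lemma pye: "py G (x,y) = deriv (\<lambda>t. G (x,t)) y" unfolding py_def by simp

lemma diffI: "(f has_real_derivative d) (at x) \<Longrightarrow> f differentiable (at x)"
  using DERIV_deriv_iff_real_differentiable DERIV_imp_deriv by metis

lemma derivs:
  assumes PD: "has_partials_on U (px f)" and PE: "has_partials_on U (py f)" and pU: "(x,y) \<in> U"
  shows "((\<lambda>t. y + 2 * px f (t,y)) has_real_derivative 2 * px (px f) (x,y)) (at x)"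
    "((\<lambda>t. t - 2 * py f (t,y)) has_real_derivative 1 - 2 * px (py f) (x,y)) (at x)"
    "((\<lambda>t. t + 2 * px f (x,t)) has_real_derivative 1 + 2 * py (px f) (x,y)) (at y)"
    "((\<lambda>t. x - 2 * py f (x,t)) has_real_derivative - 2 * py (py f) (x,y)) (at y)"
proof -
  have A: "((\<lambda>t. px f (t,y)) has_real_derivative px (px f) (x,y)) (at x)"
    using secx[OF PD pU] by simp
  have B: "((\<lambda>t. py f (t,y)) has_real_derivative px (py f) (x,y)) (at x)"
    using secx[OF PE pU] by simp
  have C: "((\<lambda>t. px f (x,t)) has_real_derivative py (px f) (x,y)) (at y)"
    using secy[OF PD pU] by simp
  have D: "((\<lambda>t. py f (x,t)) has_real_derivative py (py f) (x,y)) (at y)"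
    using secy[OF PE pU] by simp
  show "((\<lambda>t. y + 2 * px f (t,y)) has_real_derivative 2 * px (px f) (x,y)) (at x)"
    using DERIV_add[OF DERIV_const DERIV_cmult[OF A, of 2]] by simp
  show "((\<lambda>t. t - 2 * py f (t,y)) has_real_derivative 1 - 2 * px (py f) (x,y)) (at x)"
    using DERIV_diff[OF DERIV_ident DERIV_cmult[OF B, of 2]] by simp
  show "((\<lambda>t. t + 2 * px f (x,t)) has_real_derivative 1 + 2 * py (px f) (x,y)) (at y)"
    using DERIV_add[OF DERIV_ident DERIV_cmult[OF C, of 2]] by simp
  show "((\<lambda>t. x - 2 * py f (x,t)) has_real_derivative - 2 * py (py f) (x,y)) (at y)"
    using DERIV_diff[OF DERIV_const DERIV_cmult[OF D, of 2]] by simp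
qed

theorem mainTheorem9:
  fixes U :: "(real \<times> real) set" and f :: "real \<times> real \<Rightarrow> real"
  assumes "open U" and "C2_on U f"
    and eq: "\<forall>p\<in>U. (let x = fst p; y = snd p in
        2 * (x - 2 * py f p) * (y + 2 * px f p) * (py (py f) p - px (px f) p)
        + (1 - 2 * py (px f) p) * (y + 2 * px f p)^2
        + (x - 2 * py f p)^2 * (1 + 2 * py (px f) p) = 0)"
  shows "((\<forall>p\<in>U. fst p - 2 * py f p \<noteq> 0) \<longrightarrow>
           (let g = (\<lambda>p. (snd p + 2 * px f p) / (fst p - 2 * py f p)) in
              has_partials_on U g \<and> (\<forall>p\<in>U. py g p = g p * px g p)))
       \<and> ((\<forall>p\<in>U. snd p + 2 * px f p \<noteq> 0) \<longrightarrow>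
           (let h = (\<lambda>p. (fst p - 2 * py f p) / (snd p + 2 * px f p)) in
              has_partials_on U h \<and> (\<forall>p\<in>U. px h p = h p * py h p)))"
proof -
  have PD: "has_partials_on U (px f)" and PE: "has_partials_on U (py f)"
    using assms(2) unfolding C2_on_def C1_on_def by auto
  have sym: "px (py f) p = py (px f) p" if "p \<in> U" for p
    using schwarz[OF assms(1,2) that] .
  have E: "2 * (x - 2 * py f (x,y)) * (y + 2 * px f (x,y)) * (py (py f) (x,y) - px (px f) (x,y))
        + (1 - 2 * py (px f) (x,y)) * (y + 2 * px f (x,y))^2
        + (x - 2 * py f (x,y))^2 * (1 + 2 * py (px f) (x,y)) = 0" if "(x,y) \<in> U" for x y
    using eq that by (auto simp: Let_def)
  show ?thesis
  proof (intro conjI impI)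
    assume nz: "\<forall>p\<in>U. fst p - 2 * py f p \<noteq> 0"
    define g where "g = (\<lambda>p. (snd p + 2 * px f p) / (fst p - 2 * py f p))"
    have gx: "((\<lambda>t. g (t, y)) has_real_derivative
        (2 * px (px f) (x,y) * (x - 2 * py f (x,y)) - (y + 2 * px f (x,y)) * (1 - 2 * px (py f) (x,y)))
          / ((x - 2 * py f (x,y)) * (x - 2 * py f (x,y)))) (at x)"
      and gy: "((\<lambda>t. g (x, t)) has_real_derivative
        ((1 + 2 * py (px f) (x,y)) * (x - 2 * py f (x,y)) - (y + 2 * px f (x,y)) * (- 2 * py (py f) (x,y)))
          / ((x - 2 * py f (x,y)) * (x - 2 * py f (x,y)))) (at y)"
      if pU: "(x,y) \<in> U" for x y
    proof -
      have b: "x - 2 * py f (x,y) \<noteq> 0" using nz pU by auto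
      note d = derivs[OF PD PE pU]
      show "((\<lambda>t. g (t, y)) has_real_derivative
        (2 * px (px f) (x,y) * (x - 2 * py f (x,y)) - (y + 2 * px f (x,y)) * (1 - 2 * px (py f) (x,y)))
          / ((x - 2 * py f (x,y)) * (x - 2 * py f (x,y)))) (at x)"
        unfolding g_def using DERIV_divide[OF d(1) d(2)] b by simp
      show "((\<lambda>t. g (x, t)) has_real_derivative
        ((1 + 2 * py (px f) (x,y)) * (x - 2 * py f (x,y)) - (y + 2 * px f (x,y)) * (- 2 * py (py f) (x,y)))
          / ((x - 2 * py f (x,y)) * (x - 2 * py f (x,y)))) (at y)"
        unfolding g_def using DERIV_divide[OF d(3) d(4)] b by simp
    qed
    have "has_partials_on U g"
      unfolding has_partials_on_def
    proof
      fix p assume "p \<in> U"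
      then obtain x y where p: "p = (x,y)" "(x,y) \<in> U" by (cases p) auto
      show "(\<lambda>t. g (t, snd p)) differentiable at (fst p) \<and> (\<lambda>t. g (fst p, t)) differentiable at (snd p)"
        using diffI[OF gx[OF p(2)]] diffI[OF gy[OF p(2)]] p(1) by simp
    qed
    moreover have "\<forall>p\<in>U. py g p = g p * px g p"
    proof
      fix p assume "p \<in> U"
      then obtain x y where p: "p = (x,y)" "(x,y) \<in> U" by (cases p) auto
      have b: "x - 2 * py f (x,y) \<noteq> 0" using nz p by auto
      have "px g p = (2 * px (px f) (x,y) * (x - 2 * py f (x,y)) - (y + 2 * px f (x,y)) * (1 - 2 * px (py f) (x,y)))
          / ((x - 2 * py f (x,y)) * (x - 2 * py f (x,y)))"
        unfolding p(1) pxe[of g x y] using DERIV_imp_deriv[OF gx[OF p(2)]] by simp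
      moreover have "py g p = ((1 + 2 * py (px f) (x,y)) * (x - 2 * py f (x,y)) - (y + 2 * px f (x,y)) * (- 2 * py (py f) (x,y)))
          / ((x - 2 * py f (x,y)) * (x - 2 * py f (x,y)))"
        unfolding p(1) pye[of g x y] using DERIV_imp_deriv[OF gy[OF p(2)]] by simp
      moreover have "g p = (y + 2 * px f (x,y)) / (x - 2 * py f (x,y))" unfolding g_def p(1) by simp
      ultimately show "py g p = g p * px g p"
        using alg1[OF b E[OF p(2)]] sym[OF p(2)] by simp
    qed
    ultimately show "let g = (\<lambda>p. (snd p + 2 * px f p) / (fst p - 2 * py f p)) in
              has_partials_on U g \<and> (\<forall>p\<in>U. py g p = g p * px g p)"
      unfolding g_def Let_def by simp
  next
    assume nz: "\<forall>p\<in>U. snd p + 2 * px f p \<noteq> 0"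
    define g where "g = (\<lambda>p. (fst p - 2 * py f p) / (snd p + 2 * px f p))"
    have gx: "((\<lambda>t. g (t, y)) has_real_derivative
        ((1 - 2 * px (py f) (x,y)) * (y + 2 * px f (x,y)) - (x - 2 * py f (x,y)) * (2 * px (px f) (x,y)))
          / ((y + 2 * px f (x,y)) * (y + 2 * px f (x,y)))) (at x)"
      and gy: "((\<lambda>t. g (x, t)) has_real_derivative
        ((- 2 * py (py f) (x,y)) * (y + 2 * px f (x,y)) - (x - 2 * py f (x,y)) * (1 + 2 * py (px f) (x,y)))
          / ((y + 2 * px f (x,y)) * (y + 2 * px f (x,y)))) (at y)"
      if pU: "(x,y) \<in> U" for x y
    proof -
      have b: "y + 2 * px f (x,y) \<noteq> 0" using nz pU by auto
      note d = derivs[OF PD PE pU]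
      show "((\<lambda>t. g (t, y)) has_real_derivative
        ((1 - 2 * px (py f) (x,y)) * (y + 2 * px f (x,y)) - (x - 2 * py f (x,y)) * (2 * px (px f) (x,y)))
          / ((y + 2 * px f (x,y)) * (y + 2 * px f (x,y)))) (at x)"
        unfolding g_def using DERIV_divide[OF d(2) d(1)] b by simp
      show "((\<lambda>t. g (x, t)) has_real_derivative
        ((- 2 * py (py f) (x,y)) * (y + 2 * px f (x,y)) - (x - 2 * py f (x,y)) * (1 + 2 * py (px f) (x,y)))
          / ((y + 2 * px f (x,y)) * (y + 2 * px f (x,y)))) (at y)"
        unfolding g_def using DERIV_divide[OF d(4) d(3)] b by simp
    qed
    have "has_partials_on U g"
      unfolding has_partials_on_def
    proof
      fix p assume "p \<in> U"
      then obtain x y where p: "p = (x,y)" "(x,y) \<in> U" by (cases p) auto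
      show "(\<lambda>t. g (t, snd p)) differentiable at (fst p) \<and> (\<lambda>t. g (fst p, t)) differentiable at (snd p)"
        using diffI[OF gx[OF p(2)]] diffI[OF gy[OF p(2)]] p(1) by simp
    qed
    moreover have "\<forall>p\<in>U. px g p = g p * py g p"
    proof
      fix p assume "p \<in> U"
      then obtain x y where p: "p = (x,y)" "(x,y) \<in> U" by (cases p) auto
      have b: "y + 2 * px f (x,y) \<noteq> 0" using nz p by auto
      have "px g p = ((1 - 2 * px (py f) (x,y)) * (y + 2 * px f (x,y)) - (x - 2 * py f (x,y)) * (2 * px (px f) (x,y)))
          / ((y + 2 * px f (x,y)) * (y + 2 * px f (x,y)))"
        unfolding p(1) pxe[of g x y] using DERIV_imp_deriv[OF gx[OF p(2)]] by simp
      moreover have "py g p = ((- 2 * py (py f) (x,y)) * (y + 2 * px f (x,y)) - (x - 2 * py f (x,y)) * (1 + 2 * py (px f) (x,y)))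
          / ((y + 2 * px f (x,y)) * (y + 2 * px f (x,y)))"
        unfolding p(1) pye[of g x y] using DERIV_imp_deriv[OF gy[OF p(2)]] by simp
      moreover have "g p = (x - 2 * py f (x,y)) / (y + 2 * px f (x,y))" unfolding g_def p(1) by simp
      ultimately show "px g p = g p * py g p"
        using alg2[OF b E[OF p(2)]] sym[OF p(2)] by simp
    qed
    ultimately show "let h = (\<lambda>p. (fst p - 2 * py f p) / (snd p + 2 * px f p)) in
              has_partials_on U h \<and> (\<forall>p\<in>U. px h p = h p * py h p)"
      unfolding g_def Let_def by simp
  qed
qed

end
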